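(* Let $\Phi:\mathbb{R}^n\to\mathbb{R}$ be convex, of class $C^2$, bounded below, with $\operatorname{Argmin}\Phi\neq\emptyset$, and let $\alpha,\beta>0$. Consider $\dot x=v$, $\dot v=-\alpha v-\nabla\Phi(x)-\beta\nabla^2\Phi(x)v$. Let $W(x,v):=(\alpha\beta+1)\Phi(x)+\tfrac12\|v+\beta\nabla\Phi(x)\|^2$, fix $z\in\operatorname{Argmin}\Phi$, and for $\varepsilon>0$ let \[ W_\varepsilon(x,v):=W(x,v)+\varepsilon\Big(\tfrac{\alpha}{2}\|x-z\|^2+\langle v+\beta\nabla\Phi(x),\,x-z\rangle\Big). \] If $0<\varepsilon<\min\{\tfrac23\alpha,\ \tfrac2\beta\}$, then along every solution \[ \tfrac{d}{dt}W_\varepsilon(x(t),v(t))\le -c_\varepsilon\big(\|v(t)\|^2+\|\nabla\Phi(x(t))\|^2\big),\qquad c_\varepsilon:=\min\Big\{\alpha-\tfrac32\varepsilon,\ \beta-\tfrac{\beta^2}{2}\varepsilon\Big\}>0. \] *)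

theory Defs
  imports "HOL-Analysis.Analysis"
begin

definition Argmin :: "('a \<Rightarrow> real) \<Rightarrow> 'a set" where
  "Argmin \<Phi> = {z. \<forall>y. \<Phi> z \<le> \<Phi> y}"

definition W_energy ::
  "real \<Rightarrow> real \<Rightarrow> ('a::real_inner \<Rightarrow> real) \<Rightarrow> ('a \<Rightarrow> 'a) \<Rightarrow> 'a \<Rightarrow> 'a \<Rightarrow> real" where
  "W_energy \<alpha> \<beta> \<Phi> G x v = (\<alpha> * \<beta> + 1) * \<Phi> x + 1/2 * (norm (v + \<beta> *\<^sub>R G x))\<^sup>2"

definition W_eps ::
  "real \<Rightarrow> real \<Rightarrow> ('a::real_inner \<Rightarrow> real) \<Rightarrow> ('a \<Rightarrow> 'a) \<Rightarrow> 'a \<Rightarrow> real \<Rightarrow> 'a \<Rightarrow> 'a \<Rightarrow> real" where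
  "W_eps \<alpha> \<beta> \<Phi> G z \<epsilon> x v = W_energy \<alpha> \<beta> \<Phi> G x v
     + \<epsilon> * (\<alpha> / 2 * (norm (x - z))\<^sup>2 + inner (v + \<beta> *\<^sub>R G x) (x - z))"

end

theory Submission
  imports Defs
begin

lemma tangent:
  fixes \<Phi> :: "'a::real_normed_vector \<Rightarrow> real"
  assumes convex: "convex_on UNIV \<Phi>"
    and grad: "(\<Phi> has_derivative g) (at y)"
  shows "\<Phi> z - \<Phi> y \<ge> g (z - y)"
proof -
  define f where "f = (\<lambda>s::real. \<Phi> (y + s *\<^sub>R (z - y)))"
  have cf: "convex_on UNIV f"
  proof (rule convex_onI)
    fix t a b :: real assume "t > 0" "t < 1"
    have e: "y + ((1 - t) *\<^sub>R a + t *\<^sub>R b) *\<^sub>R (z - y) = (1 - t) *\<^sub>R (y + a *\<^sub>R (z - y)) + t *\<^sub>R (y + b *\<^sub>R (z - y))"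
      by (simp add: algebra_simps)
    show "f ((1 - t) *\<^sub>R a + t *\<^sub>R b) \<le> (1 - t) * f a + t * f b"
      unfolding f_def e using convex_onD[OF convex, of t] \<open>t>0\<close> \<open>t<1\<close> by simp
  qed simp
  have lin: "linear g" using grad by (rule has_derivative_linear)
  have d0: "((\<lambda>s. y + s *\<^sub>R (z - y)) has_derivative (\<lambda>h. h *\<^sub>R (z - y))) (at 0)"
    by (auto intro!: derivative_eq_intros)
  have "(f has_derivative (\<lambda>h. g (h *\<^sub>R (z - y)))) (at 0)"
    unfolding f_def using has_derivative_compose[OF d0, of \<Phi> g] grad by simp
  hence "(f has_derivative (\<lambda>h. h * g (z - y))) (at 0)"
    using linear_scale[OF lin] by simp
  hence "(f has_field_derivative g (z - y)) (at 0 within UNIV)"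
    unfolding has_field_derivative_def by (simp add: mult.commute[of _ "g (z - y)"])
  from convex_on_imp_above_tangent[OF cf _ _ _ this, of 1]
  have "f 1 - f 0 \<ge> g (z - y)" by simp
  thus ?thesis by (simp add: f_def)
qed

theorem mainTheorem11:
  fixes \<Phi> :: "real ^ 'n \<Rightarrow> real"
    and G :: "real ^ 'n \<Rightarrow> real ^ 'n"
    and H :: "real ^ 'n \<Rightarrow> ((real ^ 'n) \<Rightarrow>\<^sub>L (real ^ 'n))"
    and \<alpha> \<beta> \<epsilon> :: real
    and z :: "real ^ 'n"
    and T :: "real set"
    and x v :: "real \<Rightarrow> real ^ 'n"
  assumes convex: "convex_on UNIV \<Phi>"
    and grad: "\<And>y. (\<Phi> has_derivative (\<lambda>h. G y \<bullet> h)) (at y)"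
    and hess: "\<And>y. (G has_derivative blinfun_apply (H y)) (at y)"
    and hess_cont: "continuous_on UNIV H"
    and bdd: "bdd_below (range \<Phi>)"
    and argmin_ne: "Argmin \<Phi> \<noteq> {}"
    and \<alpha>_pos: "\<alpha> > 0" and \<beta>_pos: "\<beta> > 0"
    and z_min: "z \<in> Argmin \<Phi>"
    and \<epsilon>_pos: "0 < \<epsilon>" and \<epsilon>_bound: "\<epsilon> < min (2/3 * \<alpha>) (2 / \<beta>)"
    and T_int: "is_interval T"
    and sol_x: "\<And>t. t \<in> T \<Longrightarrow> (x has_vector_derivative v t) (at t within T)"
    and sol_v: "\<And>t. t \<in> T \<Longrightarrow> (v has_vector_derivative
                   (- \<alpha> *\<^sub>R v t - G (x t) - \<beta> *\<^sub>R blinfun_apply (H (x t)) (v t))) (at t within T)"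
  shows "min (\<alpha> - 3/2 * \<epsilon>) (\<beta> - \<beta>\<^sup>2 / 2 * \<epsilon>) > 0
     \<and> (\<forall>t\<in>T. \<exists>D. ((\<lambda>s. W_eps \<alpha> \<beta> \<Phi> G z \<epsilon> (x s) (v s)) has_real_derivative D) (at t within T)
                 \<and> D \<le> - min (\<alpha> - 3/2 * \<epsilon>) (\<beta> - \<beta>\<^sup>2 / 2 * \<epsilon>)
                          * ((norm (v t))\<^sup>2 + (norm (G (x t)))\<^sup>2))"
proof -
  define c where "c = min (\<alpha> - 3/2 * \<epsilon>) (\<beta> - \<beta>\<^sup>2 / 2 * \<epsilon>)"
  have b1: "\<beta> * \<epsilon> < 2" using \<epsilon>_bound \<beta>_pos by (simp add: field_simps)
  have "\<beta>\<^sup>2 / 2 * \<epsilon> = \<beta> * (\<beta> * \<epsilon>) / 2" by (simp add: power2_eq_square)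
  also have "\<dots> < \<beta>" using b1 \<beta>_pos by simp
  finally have c2: "\<beta> - \<beta>\<^sup>2 / 2 * \<epsilon> > 0" by simp
  have c1: "\<alpha> - 3/2 * \<epsilon> > 0" using \<epsilon>_bound by simp
  have cpos: "c > 0" using c1 c2 by (simp add: c_def)
  have zmin: "\<Phi> z \<le> \<Phi> y" for y using z_min by (simp add: Argmin_def)
  show ?thesis unfolding c_def[symmetric]
  proof (intro conjI ballI cpos)
    fix t assume tT: "t \<in> T"
    let ?F = "at t within T"
    let ?a = "- \<alpha> *\<^sub>R v t - G (x t) - \<beta> *\<^sub>R blinfun_apply (H (x t)) (v t)"
    have x': "(x has_derivative (\<lambda>h. h *\<^sub>R v t)) ?F"
      using sol_x[OF tT] by (simp add: has_vector_derivative_def)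
    have v': "(v has_derivative (\<lambda>h. h *\<^sub>R ?a)) ?F"
      using sol_v[OF tT] by (simp add: has_vector_derivative_def)
    have P': "((\<lambda>s. \<Phi> (x s)) has_derivative (\<lambda>h. G (x t) \<bullet> (h *\<^sub>R v t))) ?F"
      using has_derivative_compose[OF x' grad] .
    have G': "((\<lambda>s. G (x s)) has_derivative (\<lambda>h. blinfun_apply (H (x t)) (h *\<^sub>R v t))) ?F"
      using has_derivative_compose[OF x' hess] .
    define u where "u = v t + \<beta> *\<^sub>R G (x t)"
    define D where "D = (\<alpha> * \<beta> + 1) * (G (x t) \<bullet> v t) + u \<bullet> (- \<alpha> *\<^sub>R v t - G (x t))
       + \<epsilon> * (\<alpha> * ((x t - z) \<bullet> v t) + (- \<alpha> *\<^sub>R v t - G (x t)) \<bullet> (x t - z) + u \<bullet> v t)"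
    have "((\<lambda>s. W_eps \<alpha> \<beta> \<Phi> G z \<epsilon> (x s) (v s)) has_derivative (\<lambda>h. h * D)) ?F"
      unfolding W_eps_def W_energy_def power2_norm_eq_inner
      apply (rule derivative_eq_intros P' G' x' v' | simp)+
      apply (rule ext)
      apply (simp add: D_def u_def blinfun.scaleR_right inner_add_left inner_add_right inner_diff_left inner_diff_right inner_commute algebra_simps)
      apply (simp add: field_simps)
      done
    hence "((\<lambda>s. W_eps \<alpha> \<beta> \<Phi> G z \<epsilon> (x s) (v s)) has_real_derivative D) ?F"
      unfolding has_field_derivative_def by (simp add: mult.commute[of _ D])
    moreover have "D \<le> - c * ((norm (v t))\<^sup>2 + (norm (G (x t)))\<^sup>2)"
    proof -
      let ?g = "G (x t)" and ?w = "v t"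
      have tan: "?g \<bullet> (z - x t) \<le> 0"
        using tangent[OF convex grad[of "x t"], of z] zmin[of "x t"] by simp
      have sq: "0 \<le> (?w - \<beta> *\<^sub>R ?g) \<bullet> (?w - \<beta> *\<^sub>R ?g)" by simp
      hence cs: "2 * \<beta> * (?g \<bullet> ?w) \<le> ?w \<bullet> ?w + \<beta>\<^sup>2 * (?g \<bullet> ?g)"
        by (simp add: inner_diff_left inner_diff_right inner_commute power2_eq_square algebra_simps)
      have Dx: "D = - \<alpha> * (?w \<bullet> ?w) - \<beta> * (?g \<bullet> ?g) + \<epsilon> * (?g \<bullet> (z - x t) + ?w \<bullet> ?w + \<beta> * (?g \<bullet> ?w))"
        unfolding D_def u_def
        by (simp add: inner_add_left inner_add_right inner_diff_left inner_diff_right inner_commute algebra_simps)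
      have "D \<le> - \<alpha> * (?w \<bullet> ?w) - \<beta> * (?g \<bullet> ?g) + \<epsilon> * (?w \<bullet> ?w + (?w \<bullet> ?w + \<beta>\<^sup>2 * (?g \<bullet> ?g)) / 2)"
        unfolding Dx using tan cs \<epsilon>_pos by (intro add_left_mono mult_left_mono) auto
      also have "\<dots> = - ((\<alpha> - 3/2 * \<epsilon>) * (?w \<bullet> ?w) + (\<beta> - \<beta>\<^sup>2 / 2 * \<epsilon>) * (?g \<bullet> ?g))"
        by (simp add: algebra_simps add_divide_distrib)
      also have "\<dots> \<le> - (c * (?w \<bullet> ?w) + c * (?g \<bullet> ?g))"
        unfolding neg_le_iff_le
        by (intro add_mono mult_right_mono) (auto simp: c_def)
      finally show ?thesis by (simp add: power2_norm_eq_inner algebra_simps)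
    qed
    ultimately show "\<exists>D. ((\<lambda>s. W_eps \<alpha> \<beta> \<Phi> G z \<epsilon> (x s) (v s)) has_real_derivative D) ?F
       \<and> D \<le> - c * ((norm (v t))\<^sup>2 + (norm (G (x t)))\<^sup>2)" by blast
  qed
qed

end
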